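(* Let $f$ be a formula with $m$ clauses over $n$ variables, each clause being a CNF, cardinality, XOR or NAE constraint, and let $F=\sum_c\mathrm{FE}_c$, a multilinear polynomial on $[-1,1]^n$ with values in $[-m,m]$. Run projected gradient descent with step size $\eta=\frac{1}{nm}$ from any starting point $x_0\in[-1,1]^n$: $$x_{t+1}=\Pi_{[-1,1]^n}\big(x_t-\eta\nabla F(x_t)\big)=x_t-\eta G(x_t).$$ Then within $O\big(\frac{nm^2}{\epsilon^2}\big)$ iterations it reaches an $\epsilon$-projected-critical point, i.e. an iterate $x_t$ with $\|G(x_t)\|_2<\epsilon$.
   Context: Boolean values are encoded as $\pm1$, with $-1$ standing for True. $\mathrm{FE}_c$ is the Fourier expansion of clause $c$, i.e. the unique multilinear polynomial agreeing with $c$ (as a $\{\pm1\}$-valued function) on $\{\pm1\}^n$. $\Pi_{[-1,1]^n}(y)=\arg\min_{x\in[-1,1]^n}\tfrac12\|x-y\|_2^2$ is the Euclidean projection onto the cube. The gradient mapping is $G(x)=\frac1\eta\big(x-\Pi_{[-1,1]^n}(x-\eta\nabla F(x))\big)$. *)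

theory Defs
  imports "HOL-Analysis.Analysis"
begin

(* Vectors in R^n are represented as functions nat => real, with coordinates
   0..n-1 meaningful and all other coordinates equal to 0. *)

type_synonym lit = "nat \<times> bool"   (* (variable, polarity); True = positive literal *)

datatype clause =
    CNF "lit list"
  | Card "lit list" nat
  | XOR "lit list"
  | NAE "lit list"

fun clause_lits :: "clause \<Rightarrow> lit list" where
  "clause_lits (CNF ls) = ls"
| "clause_lits (Card ls k) = ls"
| "clause_lits (XOR ls) = ls"
| "clause_lits (NAE ls) = ls"

definition clause_vars :: "clause \<Rightarrow> nat set" where
  "clause_vars c = fst ` set (clause_lits c)"

(* +-1 encoding: -1 stands for True *)
definition lit_val :: "(nat \<Rightarrow> real) \<Rightarrow> lit \<Rightarrow> bool" where
  "lit_val y l = (if snd l then y (fst l) = -1 else y (fst l) \<noteq> -1)"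

fun sat :: "(nat \<Rightarrow> real) \<Rightarrow> clause \<Rightarrow> bool" where
  "sat y (CNF ls) = (\<exists>l\<in>set ls. lit_val y l)"
| "sat y (Card ls k) = (k \<le> length (filter (lit_val y) ls))"
| "sat y (XOR ls) = odd (length (filter (lit_val y) ls))"
| "sat y (NAE ls) = ((\<exists>l\<in>set ls. lit_val y l) \<and> (\<exists>l\<in>set ls. \<not> lit_val y l))"

definition cval :: "clause \<Rightarrow> (nat \<Rightarrow> real) \<Rightarrow> real" where
  "cval c y = (if sat y c then -1 else 1)"

definition pt :: "nat \<Rightarrow> nat set \<Rightarrow> nat \<Rightarrow> real" where
  "pt n B = (\<lambda>i. if i \<in> B then -1 else if i < n then 1 else 0)"

definition fcoef :: "nat \<Rightarrow> clause \<Rightarrow> nat set \<Rightarrow> real" where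
  "fcoef n c S = (1 / 2 ^ n) * (\<Sum>B\<in>Pow {..<n}. cval c (pt n B) * (\<Prod>i\<in>S. pt n B i))"

definition FE :: "nat \<Rightarrow> clause \<Rightarrow> (nat \<Rightarrow> real) \<Rightarrow> real" where
  "FE n c x = (\<Sum>S\<in>Pow {..<n}. fcoef n c S * (\<Prod>i\<in>S. x i))"

definition Fsum :: "nat \<Rightarrow> clause list \<Rightarrow> (nat \<Rightarrow> real) \<Rightarrow> real" where
  "Fsum n f x = (\<Sum>c\<leftarrow>f. FE n c x)"

definition cube :: "nat \<Rightarrow> (nat \<Rightarrow> real) set" where
  "cube n = {x. (\<forall>i<n. -1 \<le> x i \<and> x i \<le> 1) \<and> (\<forall>i. n \<le> i \<longrightarrow> x i = 0)}"

definition vnorm :: "nat \<Rightarrow> (nat \<Rightarrow> real) \<Rightarrow> real" where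
  "vnorm n v = sqrt (\<Sum>i<n. (v i)\<^sup>2)"

definition grad :: "nat \<Rightarrow> ((nat \<Rightarrow> real) \<Rightarrow> real) \<Rightarrow> (nat \<Rightarrow> real) \<Rightarrow> nat \<Rightarrow> real" where
  "grad n F x = (\<lambda>i. if i < n then deriv (\<lambda>s. F (x(i := s))) (x i) else 0)"

definition proj :: "nat \<Rightarrow> (nat \<Rightarrow> real) \<Rightarrow> nat \<Rightarrow> real" where
  "proj n y = (THE x. x \<in> cube n \<and>
      (\<forall>z\<in>cube n. (1/2) * (vnorm n (\<lambda>i. x i - y i))\<^sup>2 \<le> (1/2) * (vnorm n (\<lambda>i. z i - y i))\<^sup>2))"

definition gmap :: "nat \<Rightarrow> real \<Rightarrow> ((nat \<Rightarrow> real) \<Rightarrow> real) \<Rightarrow> (nat \<Rightarrow> real) \<Rightarrow> nat \<Rightarrow> real" where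
  "gmap n \<eta> F x = (\<lambda>i. (1 / \<eta>) * (x i - proj n (\<lambda>j. x j - \<eta> * grad n F x j) i))"

definition pgd :: "nat \<Rightarrow> real \<Rightarrow> ((nat \<Rightarrow> real) \<Rightarrow> real) \<Rightarrow> (nat \<Rightarrow> real) \<Rightarrow> nat \<Rightarrow> nat \<Rightarrow> real" where
  "pgd n \<eta> F x0 t = ((\<lambda>x. proj n (\<lambda>j. x j - \<eta> * grad n F x j)) ^^ t) x0"

end

theory Submission
  imports Defs
begin

definition pB :: "nat set \<Rightarrow> nat \<Rightarrow> real" where "pB B i = (if i \<in> B then -1 else 1)"
definition qf :: "nat set \<Rightarrow> nat \<Rightarrow> real \<Rightarrow> real" where "qf B i t = (1 + pB B i * t) / 2"
definition PP :: "nat set \<Rightarrow> nat set \<Rightarrow> (nat \<Rightarrow> real) \<Rightarrow> real" where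
  "PP B J x = (\<Prod>i\<in>J. qf B i (x i))"
definition MM :: "nat set \<Rightarrow> (nat set \<Rightarrow> real) \<Rightarrow> nat set \<Rightarrow> (nat \<Rightarrow> real) \<Rightarrow> real" where
  "MM V c J x = (\<Sum>B\<in>Pow V. c B * PP B J x)"

lemma PP_upd:
  assumes "finite J" "k \<in> J"
  shows "PP B J (x(k:=s)) = qf B k s * PP B (J - {k}) x"
proof -
  have "PP B J (x(k:=s)) = qf B k s * (\<Prod>i\<in>J-{k}. qf B i ((x(k:=s)) i))"
    unfolding PP_def using assms by (simp add: prod.remove)
  also have "(\<Prod>i\<in>J-{k}. qf B i ((x(k:=s)) i)) = PP B (J - {k}) x"
    unfolding PP_def by (rule prod.cong) auto
  finally show ?thesis .
qed

lemma MM_upd: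
  assumes "finite J" "k \<in> J"
  shows "MM V c J (x(k:=s)) = MM V (\<lambda>B. c B / 2) (J-{k}) x + s * MM V (\<lambda>B. c B * pB B k / 2) (J - {k}) x"
  unfolding MM_def using assms
  by (simp add: PP_upd qf_def sum_distrib_left sum.distrib[symmetric] algebra_simps add_divide_distrib)

lemma MM_cong:
  assumes "\<And>i. i \<in> J \<Longrightarrow> x i = x' i"
  shows "MM V c J x = MM V c J x'"
  unfolding MM_def PP_def using assms by (intro sum.cong refl arg_cong2[where f="(*)"] prod.cong) auto

lemma PP_nonneg:
  assumes "\<And>i. i \<in> J \<Longrightarrow> \<bar>x i\<bar> \<le> 1"
  shows "PP B J x \<ge> 0"
  unfolding PP_def
proof (rule prod_nonneg)
  fix i assume "i \<in> J"
  then have "\<bar>x i\<bar> \<le> 1" by (rule assms)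
  then show "0 \<le> qf B i (x i)" unfolding qf_def pB_def by auto
qed

lemma PP_partition:
  assumes "finite V"
  shows "J \<subseteq> V \<Longrightarrow> (\<Sum>B\<in>Pow V. PP B J x) = 2 ^ card (V - J)"
  using assms
proof (induction V arbitrary: J rule: finite_induct)
  case empty
  then show ?case by (simp add: PP_def)
next
  case (insert a V)
  have inj: "inj_on (insert a) (Pow V)" using insert.hyps
    by (meson PowD inj_on_def insert_ident subset_iff)
  have split: "(\<Sum>B\<in>Pow (insert a V). PP B J x) = (\<Sum>B\<in>Pow V. PP B J x) + (\<Sum>B\<in>Pow V. PP (insert a B) J x)"
    unfolding Pow_insert
    by (subst sum.union_disjoint) (use insert.hyps inj in \<open>auto simp: sum.reindex\<close>)
  show ?case
  proof (cases "a \<in> J")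
    case True
    let ?J = "J - {a}"
    have J': "?J \<subseteq> V" using insert.prems by auto
    have fJ: "finite J" using insert.prems insert.hyps finite_subset by blast
    have "(\<Sum>B\<in>Pow V. PP B J x) + (\<Sum>B\<in>Pow V. PP (insert a B) J x) = (\<Sum>B\<in>Pow V. PP B J x + PP (insert a B) J x)"
      by (simp add: sum.distrib)
    also have "\<dots> = (\<Sum>B\<in>Pow V. PP B ?J x)"
    proof (rule sum.cong[OF refl])
      fix B assume B: "B \<in> Pow V"
      have aB: "a \<notin> B" using B insert.hyps by auto
      have e1: "PP B J x = qf B a (x a) * PP B ?J x" unfolding PP_def using fJ True by (simp add: prod.remove)
      have e2: "PP (insert a B) J x = qf (insert a B) a (x a) * PP (insert a B) ?J x"
        unfolding PP_def using fJ True by (simp add: prod.remove)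
      have e3: "PP (insert a B) ?J x = PP B ?J x" unfolding PP_def qf_def pB_def
        by (rule prod.cong) auto
      show "PP B J x + PP (insert a B) J x = PP B ?J x"
        unfolding e1 e2 e3 using aB by (simp add: qf_def pB_def field_simps)
    qed
    also have "\<dots> = 2 ^ card (V - ?J)" using insert.IH[OF J'] .
    also have "V - ?J = insert a V - J" using True insert.hyps by auto
    finally show ?thesis using split by simp
  next
    case False
    have J': "J \<subseteq> V" using insert.prems False by auto
    have e3: "\<And>B. PP (insert a B) J x = PP B J x" unfolding PP_def qf_def pB_def
      by (rule prod.cong) (use False in auto)
    have fin: "finite (V - J)" using insert.hyps by auto
    have "insert a V - J = insert a (V - J)" using False by auto
    then have "card (insert a V - J) = Suc (card (V - J))" using fin insert.hyps by simp
    then show ?thesis using split e3 insert.IH[OF J'] by simp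
  qed
qed

lemma MM_bound:
  assumes "finite V" "J \<subseteq> V" "\<And>i. i \<in> J \<Longrightarrow> \<bar>x i\<bar> \<le> 1" "\<And>B. \<bar>c B\<bar> \<le> K"
  shows "\<bar>MM V c J x\<bar> \<le> K * 2 ^ card (V - J)"
proof -
  have "\<bar>MM V c J x\<bar> \<le> (\<Sum>B\<in>Pow V. \<bar>c B * PP B J x\<bar>)" unfolding MM_def by (rule sum_abs)
  also have "\<dots> \<le> (\<Sum>B\<in>Pow V. K * PP B J x)"
  proof (rule sum_mono)
    fix B
    have "PP B J x \<ge> 0" using PP_nonneg assms(3) by blast
    then show "\<bar>c B * PP B J x\<bar> \<le> K * PP B J x"
      by (simp add: abs_mult assms(4) mult_right_mono)
  qed
  also have "\<dots> = K * 2 ^ card (V - J)" using PP_partition[OF assms(1,2)] by (simp add: sum_distrib_left[symmetric])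
  finally show ?thesis .
qed


lemma sum_pairs_sq:
  fixes d :: "nat \<Rightarrow> real"
  shows "(\<Sum>k<n. \<Sum>j<k. (d k)^2 + (d j)^2) = (real n - 1) * (\<Sum>k<n. (d k)^2)"
proof (induction n)
  case 0 then show ?case by simp
next
  case (Suc n)
  have "(\<Sum>j<n. (d n)^2 + (d j)^2) = real n * (d n)^2 + (\<Sum>j<n. (d j)^2)"
    by (simp add: sum.distrib)
  then show ?case using Suc by (simp add: algebra_simps)
qed

lemma smooth:
  fixes n :: nat and h :: "nat set \<Rightarrow> real" and m :: real
  assumes hb: "\<And>B. \<bar>h B\<bar> \<le> m" and xb: "\<And>i. i<n \<Longrightarrow> \<bar>x i\<bar> \<le> 1" and yb: "\<And>i. i<n \<Longrightarrow> \<bar>y i\<bar> \<le> 1"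
  shows "MM {..<n} h {..<n} y - MM {..<n} h {..<n} x
     - (\<Sum>k<n. (y k - x k) * MM {..<n} (\<lambda>B. h B * pB B k / 2) ({..<n} - {k}) x)
     \<le> m * (real n - 1) / 2 * (\<Sum>k<n. (y k - x k)^2)"
proof -
  define V where "V = {..<n::nat}"
  define z where "z k = (\<lambda>i. if i < k then y i else x i)" for k
  define D where "D k w = MM V (\<lambda>B. h B * pB B k / 2) (V - {k}) w" for k w
  define E where "E j k w = MM V (\<lambda>B. h B * pB B k / 2 * pB B j / 2) (V - {k} - {j}) w" for j k w
  define d where "d i = y i - x i" for i
  have fV: "finite V" unfolding V_def by simp
  have zc: "\<And>k i. i < n \<Longrightarrow> \<bar>z k i\<bar> \<le> 1" unfolding z_def using xb yb by auto
  have z0: "z 0 = x" unfolding z_def by auto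
  have s1: "MM V h V (z (Suc k)) - MM V h V (z k) = d k * D k (z k)" if "k < n" for k
  proof -
    have kV: "k \<in> V" using that V_def by auto
    have za: "(z k)(k := y k) = z (Suc k)" "(z k)(k := x k) = z k" unfolding z_def by (auto simp: fun_eq_iff)
    have e1: "MM V h V (z (Suc k)) = MM V (\<lambda>B. h B/2) (V-{k}) (z k) + y k * D k (z k)"
      using MM_upd[OF fV kV, of V h "z k" "y k"] unfolding za D_def .
    have e2: "MM V h V (z k) = MM V (\<lambda>B. h B/2) (V-{k}) (z k) + x k * D k (z k)"
      using MM_upd[OF fV kV, of V h "z k" "x k"] unfolding za D_def .
    show ?thesis unfolding e1 e2 d_def by (simp add: algebra_simps)
  qed
  have s2: "D k (z (Suc j)) - D k (z j) = d j * E j k (z j)" if "j < k" "k < n" for j k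
  proof -
    have jV: "j \<in> V - {k}" using that V_def by auto
    have fV': "finite (V - {k})" using fV by simp
    have za: "(z j)(j := y j) = z (Suc j)" "(z j)(j := x j) = z j" unfolding z_def by (auto simp: fun_eq_iff)
    have e1: "D k (z (Suc j)) = MM V (\<lambda>B. h B * pB B k / 2 / 2) (V-{k}-{j}) (z j) + y j * E j k (z j)"
      using MM_upd[OF fV' jV, of V "\<lambda>B. h B * pB B k / 2" "z j" "y j"] unfolding za D_def E_def .
    have e2: "D k (z j) = MM V (\<lambda>B. h B * pB B k / 2 / 2) (V-{k}-{j}) (z j) + x j * E j k (z j)"
      using MM_upd[OF fV' jV, of V "\<lambda>B. h B * pB B k / 2" "z j" "x j"] unfolding za D_def E_def .
    show ?thesis unfolding e1 e2 d_def by (simp add: algebra_simps)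
  qed
  have s3: "\<bar>E j k (z j')\<bar> \<le> m" if "j < k" "k < n" for j k j'
  proof -
    have sub: "V - {k} - {j} \<subseteq> V" by auto
    have cd: "V - (V - {k} - {j}) = {j, k}" using that V_def by auto
    have "\<bar>E j k (z j')\<bar> \<le> m / 4 * 2 ^ card (V - (V - {k} - {j}))"
      unfolding E_def
    proof (rule MM_bound[OF fV sub])
      show "\<And>i. i \<in> V - {k} - {j} \<Longrightarrow> \<bar>z j' i\<bar> \<le> 1" using zc V_def by auto
      fix B
      have "\<bar>pB B k\<bar> = 1" "\<bar>pB B j\<bar> = 1" unfolding pB_def by auto
      then show "\<bar>h B * pB B k / 2 * pB B j / 2\<bar> \<le> m / 4" using hb[of B] by (simp add: abs_mult)
    qed
    also have "\<dots> = m" unfolding cd using that by simp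
    finally show ?thesis .
  qed
  have tel1: "MM V h V y - MM V h V x = (\<Sum>k<n. d k * D k (z k))"
  proof -
    have "MM V h V y = MM V h V (z n)" by (rule MM_cong) (auto simp: z_def V_def)
    then have "MM V h V y - MM V h V x = MM V h V (z n) - MM V h V (z 0)" using z0 by simp
    also have "\<dots> = (\<Sum>k<n. MM V h V (z (Suc k)) - MM V h V (z k))"
      by (rule sum_lessThan_telescope[symmetric])
    also have "\<dots> = (\<Sum>k<n. d k * D k (z k))" by (rule sum.cong) (auto simp: s1)
    finally show ?thesis .
  qed
  have tel2: "D k (z k) - D k x = (\<Sum>j<k. d j * E j k (z j))" if "k < n" for k
  proof -
    have "D k (z k) - D k x = D k (z k) - D k (z 0)" using z0 by simp
    also have "\<dots> = (\<Sum>j<k. D k (z (Suc j)) - D k (z j))"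
      by (rule sum_lessThan_telescope[symmetric])
    also have "\<dots> = (\<Sum>j<k. d j * E j k (z j))" by (rule sum.cong) (use that in \<open>auto simp: s2\<close>)
    finally show ?thesis .
  qed
  have "MM V h V y - MM V h V x - (\<Sum>k<n. d k * D k x) = (\<Sum>k<n. d k * (D k (z k) - D k x))"
    unfolding tel1 by (simp add: sum_subtractf[symmetric] algebra_simps)
  also have "\<dots> = (\<Sum>k<n. \<Sum>j<k. d k * d j * E j k (z j))"
    by (rule sum.cong) (auto simp: tel2 sum_distrib_left mult.assoc)
  also have "\<dots> \<le> (\<Sum>k<n. \<Sum>j<k. m / 2 * ((d k)^2 + (d j)^2))"
  proof (rule sum_mono, rule sum_mono)
    fix k j assume "k \<in> {..<n}" "j \<in> {..<k}"
    then have b: "\<bar>E j k (z j)\<bar> \<le> m" using s3 by auto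
    have m0: "m \<ge> 0" using hb[of "{}"] by linarith
    have "d k * d j * E j k (z j) \<le> \<bar>d k * d j\<bar> * \<bar>E j k (z j)\<bar>"
      by (metis abs_ge_self abs_mult)
    also have "\<dots> \<le> \<bar>d k * d j\<bar> * m" using b by (simp add: mult_left_mono)
    also have "\<dots> \<le> ((d k)^2 + (d j)^2) / 2 * m"
    proof (rule mult_right_mono[OF _ m0])
      have "0 \<le> (\<bar>d k\<bar> - \<bar>d j\<bar>)^2" by simp
      then show "\<bar>d k * d j\<bar> \<le> ((d k)^2 + (d j)^2) / 2"
        by (simp add: power2_eq_square abs_mult algebra_simps abs_mult_self_eq)
    qed
    finally show "d k * d j * E j k (z j) \<le> m / 2 * ((d k)^2 + (d j)^2)" by (simp add: mult.commute)
  qed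
  also have "\<dots> = m / 2 * (real n - 1) * (\<Sum>k<n. (d k)^2)"
  proof -
    have "(\<Sum>k<n. \<Sum>j<k. m / 2 * ((d k)^2 + (d j)^2)) = m / 2 * (\<Sum>k<n. \<Sum>j<k. ((d k)^2 + (d j)^2))"
      by (simp only: sum_distrib_left)
    then show ?thesis by (simp only: sum_pairs_sq)
  qed
  finally show ?thesis unfolding V_def d_def D_def by (simp add: algebra_simps)
qed


lemma grad_MM:
  assumes "k < n"
  shows "grad n (MM {..<n} h {..<n}) x k = MM {..<n} (\<lambda>B. h B * pB B k / 2) ({..<n} - {k}) x"
proof -
  define A where "A = MM {..<n} (\<lambda>B. h B / 2) ({..<n}-{k}) x"
  define D where "D = MM {..<n} (\<lambda>B. h B * pB B k / 2) ({..<n} - {k}) x"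
  have "(\<lambda>s. MM {..<n} h {..<n} (x(k:=s))) = (\<lambda>s. A + s * D)"
    using MM_upd[of "{..<n}" k "{..<n}" h x] assms unfolding A_def D_def by auto
  moreover have "deriv (\<lambda>s. A + s * D) (x k) = D"
    by (rule DERIV_imp_deriv) (auto intro!: derivative_eq_intros)
  ultimately show ?thesis unfolding grad_def D_def using assms by simp
qed

lemma sum_pow_prod:
  fixes g :: "nat \<Rightarrow> real"
  assumes "finite A"
  shows "(\<Sum>S\<in>Pow A. \<Prod>i\<in>S. g i) = (\<Prod>i\<in>A. g i + 1)"
  using prod_add[OF assms, of g "\<lambda>_. 1"] by simp

lemma FE_repr: "FE n c x = (\<Sum>B\<in>Pow {..<n}. cval c (pt n B) * PP B {..<n} x)"
proof -
  have "FE n c x = (\<Sum>S\<in>Pow {..<n}. \<Sum>B\<in>Pow {..<n}. (1 / 2 ^ n * cval c (pt n B)) * (\<Prod>i\<in>S. pt n B i * x i))"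
    unfolding FE_def fcoef_def
    by (simp add: sum_distrib_left sum_distrib_right prod.distrib mult.assoc)
  also have "\<dots> = (\<Sum>B\<in>Pow {..<n}. (1 / 2 ^ n * cval c (pt n B)) * (\<Sum>S\<in>Pow {..<n}. \<Prod>i\<in>S. pt n B i * x i))"
    by (subst sum.swap) (simp add: sum_distrib_left)
  also have "\<dots> = (\<Sum>B\<in>Pow {..<n}. cval c (pt n B) * PP B {..<n} x)"
  proof (rule sum.cong[OF refl])
    fix B
    have "(\<Sum>S\<in>Pow {..<n}. \<Prod>i\<in>S. pt n B i * x i) = (\<Prod>i<n. pt n B i * x i + 1)"
      by (rule sum_pow_prod) simp
    moreover have "PP B {..<n} x = (\<Prod>i<n. (pt n B i * x i + 1) / 2)"
      unfolding PP_def qf_def pB_def pt_def by (rule prod.cong) auto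
    moreover have "(\<Prod>i<n. (pt n B i * x i + 1) / 2) = (\<Prod>i<n. pt n B i * x i + 1) / 2 ^ n"
      by (simp add: prod_dividef)
    ultimately show "(1 / 2 ^ n * cval c (pt n B)) * (\<Sum>S\<in>Pow {..<n}. \<Prod>i\<in>S. pt n B i * x i) =
        cval c (pt n B) * PP B {..<n} x" by simp
  qed
  finally show ?thesis .
qed

definition hh :: "nat \<Rightarrow> clause list \<Rightarrow> nat set \<Rightarrow> real" where
  "hh n f B = sum_list (map (\<lambda>c. cval c (pt n B)) f)"

lemma Fsum_repr: "Fsum n f = MM {..<n} (hh n f) {..<n}"
proof
  fix x
  show "Fsum n f x = MM {..<n} (hh n f) {..<n} x"
    unfolding Fsum_def MM_def hh_def
    by (induction f) (simp_all add: FE_repr sum.distrib distrib_right)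
qed

lemma hh_bound: "\<bar>hh n f B\<bar> \<le> real (length f)"
  unfolding hh_def
proof (induction f)
  case Nil then show ?case by simp
next
  case (Cons c f)
  have "\<bar>cval c (pt n B)\<bar> \<le> 1" unfolding cval_def by auto
  then show ?case using Cons by simp
qed

definition clip :: "nat \<Rightarrow> (nat \<Rightarrow> real) \<Rightarrow> nat \<Rightarrow> real" where
  "clip n v = (\<lambda>i. if i < n then max (-1) (min 1 (v i)) else 0)"

lemma clip_prod:
  fixes a v :: real
  assumes "\<bar>a\<bar> \<le> 1"
  shows "(a - max (-1) (min 1 v)) * (max (-1) (min 1 v) - v) \<ge> 0"
proof (cases "v > 1")
  case True then show ?thesis using assms by (simp add: mult_nonpos_nonpos)
next
  case False
  show ?thesis
  proof (cases "v < -1")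
    case True then show ?thesis using assms by (simp add: mult_nonneg_nonneg)
  next
    case False2: False
    then show ?thesis using False by simp
  qed
qed

lemma clip_ineq:
  fixes a v :: real
  assumes "\<bar>a\<bar> \<le> 1"
  shows "(a - v)^2 \<ge> (max (-1) (min 1 v) - v)^2 + (a - max (-1) (min 1 v))^2"
proof -
  define c where "c = max (-1) (min 1 v)"
  have "(a - c) * (c - v) \<ge> 0" using clip_prod[OF assms] unfolding c_def .
  moreover have "(a - v)^2 = (c - v)^2 + (a - c)^2 + 2 * ((a - c) * (c - v))"
    by (simp add: power2_eq_square algebra_simps)
  ultimately show ?thesis unfolding c_def[symmetric] by linarith
qed

lemma vnorm_sq: "(vnorm n w)^2 = (\<Sum>i<n. (w i)^2)"
  unfolding vnorm_def by (simp add: sum_nonneg)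

lemma clip_cube: "clip n v \<in> cube n"
  unfolding clip_def cube_def by auto

lemma proj_clip: "proj n v = clip n v"
  unfolding proj_def
proof (rule the_equality)
  have key: "(\<Sum>i<n. (clip n v i - v i)^2) + (\<Sum>i<n. (z i - clip n v i)^2) \<le> (\<Sum>i<n. (z i - v i)^2)"
    if "z \<in> cube n" for z
  proof -
    have "(\<Sum>i<n. (clip n v i - v i)^2 + (z i - clip n v i)^2) \<le> (\<Sum>i<n. (z i - v i)^2)"
    proof (rule sum_mono)
      fix i assume "i \<in> {..<n}"
      then have "\<bar>z i\<bar> \<le> 1" "i < n" using that unfolding cube_def by auto
      then show "(clip n v i - v i)^2 + (z i - clip n v i)^2 \<le> (z i - v i)^2"
        unfolding clip_def using clip_ineq by simp
    qed
    then show ?thesis by (simp add: sum.distrib)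
  qed
  show "clip n v \<in> cube n \<and> (\<forall>z\<in>cube n. 1 / 2 * (vnorm n (\<lambda>i. clip n v i - v i))\<^sup>2 \<le> 1 / 2 * (vnorm n (\<lambda>i. z i - v i))\<^sup>2)"
  proof (intro conjI ballI clip_cube)
    fix z assume "z \<in> cube n"
    from key[OF this] have "(\<Sum>i<n. (clip n v i - v i)^2) \<le> (\<Sum>i<n. (z i - v i)^2)"
      using sum_nonneg[of "{..<n}" "\<lambda>i. (z i - clip n v i)^2"] by simp
    then show "1 / 2 * (vnorm n (\<lambda>i. clip n v i - v i))\<^sup>2 \<le> 1 / 2 * (vnorm n (\<lambda>i. z i - v i))\<^sup>2"
      unfolding vnorm_sq by simp
  qed
  fix x assume H: "x \<in> cube n \<and> (\<forall>z\<in>cube n. 1 / 2 * (vnorm n (\<lambda>i. x i - v i))\<^sup>2 \<le> 1 / 2 * (vnorm n (\<lambda>i. z i - v i))\<^sup>2)"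
  then have "(\<Sum>i<n. (x i - v i)^2) \<le> (\<Sum>i<n. (clip n v i - v i)^2)"
    using clip_cube[of n v] unfolding vnorm_sq by auto
  with key[of x] H have "(\<Sum>i<n. (x i - clip n v i)^2) \<le> 0" by simp
  then have "\<forall>i\<in>{..<n}. (x i - clip n v i)^2 = 0"
    using sum_nonneg_eq_0_iff[of "{..<n}" "\<lambda>i. (x i - clip n v i)^2"]
    by (simp add: antisym sum_nonneg)
  then show "x = clip n v" using H unfolding cube_def clip_def by (auto simp: fun_eq_iff)
qed


lemma descent:
  fixes n :: nat and h :: "nat set \<Rightarrow> real" and m :: real
  assumes n: "n > 0" and m: "m > 0" and hb: "\<And>B. \<bar>h B\<bar> \<le> m"
    and xb: "\<And>i. i<n \<Longrightarrow> \<bar>x i\<bar> \<le> 1"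
    and Fdef: "F = MM {..<n} h {..<n}" and etadef: "\<eta> = 1 / (real n * m)"
  shows "F (proj n (\<lambda>j. x j - \<eta> * grad n F x j)) \<le> F x - \<eta>/2 * (vnorm n (gmap n \<eta> F x))^2"
proof -
  define L where "L = real n * m"
  have L: "L > 0" unfolding L_def using n m by simp
  have eta: "\<eta> = 1 / L" unfolding etadef L_def ..
  define y where "y = proj n (\<lambda>j. x j - \<eta> * grad n F x j)"
  define D where "D k = MM {..<n} (\<lambda>B. h B * pB B k / 2) ({..<n} - {k}) x" for k
  define S where "S = (\<Sum>k<n. (y k - x k)^2)"
  have yk: "y k = max (-1) (min 1 (x k - \<eta> * D k))" if "k < n" for k
    unfolding y_def proj_clip clip_def D_def Fdef using that grad_MM[OF that] by simp
  have yc: "\<And>i. i<n \<Longrightarrow> \<bar>y i\<bar> \<le> 1" using yk by auto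
  have sm: "F y - F x - (\<Sum>k<n. (y k - x k) * D k) \<le> m * (real n - 1) / 2 * S"
    unfolding Fdef D_def S_def by (rule smooth[OF hb xb yc])
  have per: "(y k - x k) * D k \<le> - L * (y k - x k)^2" if "k < n" for k
  proof -
    have "(x k - y k) * (y k - (x k - \<eta> * D k)) \<ge> 0"
      using clip_prod[OF xb[OF that], of "x k - \<eta> * D k"] yk[OF that] by simp
    then have "(x k - y k) * (D k / L) \<ge> (y k - x k)^2"
      unfolding eta by (simp add: power2_eq_square algebra_simps)
    then have "L * ((x k - y k) * (D k / L)) \<ge> L * (y k - x k)^2"
      using L by (intro mult_left_mono) auto
    then show ?thesis using L by (simp add: algebra_simps)
  qed
  have sumper: "(\<Sum>k<n. (y k - x k) * D k) \<le> - L * S"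
    unfolding S_def sum_distrib_left by (rule sum_mono) (use per in auto)
  have gm: "(vnorm n (gmap n \<eta> F x))^2 = L^2 * S"
  proof -
    have "gmap n \<eta> F x = (\<lambda>i. L * (x i - y i))"
      unfolding gmap_def y_def using eta by (simp add: fun_eq_iff)
    then show ?thesis unfolding vnorm_sq S_def
      by (simp add: sum_distrib_left power2_eq_square algebra_simps)
  qed
  have S0: "S \<ge> 0" unfolding S_def by (simp add: sum_nonneg)
  have "m * (real n - 1) / 2 * S \<le> L / 2 * S"
    using S0 m unfolding L_def by (intro mult_right_mono) (auto simp: algebra_simps)
  then have "F y \<le> F x - L / 2 * S" using sm sumper by (simp add: algebra_simps)
  moreover have "\<eta>/2 * (vnorm n (gmap n \<eta> F x))^2 = L / 2 * S"
  proof -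
    have "\<eta>/2 * L^2 * S = L / 2 * S" unfolding eta using L by (simp add: power2_eq_square)
    then show ?thesis unfolding gm by simp
  qed
  ultimately show ?thesis unfolding y_def by simp
qed


theorem theorem8:
  shows "\<exists>C>0. \<forall>(n::nat) (f::clause list) (x0::nat \<Rightarrow> real) (\<epsilon>::real).
     (\<forall>c\<in>set f. clause_vars c \<subseteq> {..<n}) \<longrightarrow> x0 \<in> cube n \<longrightarrow> \<epsilon> > 0 \<longrightarrow>
     (let m = length f; \<eta> = 1 / (real n * real m); F = Fsum n f in
      \<exists>t::nat. real t \<le> C * real n * (real m)\<^sup>2 / \<epsilon>\<^sup>2 \<and>
               vnorm n (gmap n \<eta> F (pgd n \<eta> F x0 t)) < \<epsilon>)"
proof (rule exI[of _ 4], intro conjI allI impI)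
  fix n :: nat and f :: "clause list" and x0 :: "nat \<Rightarrow> real" and \<epsilon> :: real
  assume x0: "x0 \<in> cube n" and ep: "\<epsilon> > 0"
  define M where "M = real (length f)"
  define \<eta> where "\<eta> = 1 / (real n * M)"
  define F where "F = Fsum n f"
  define xs where "xs t = pgd n \<eta> F x0 t" for t
  define G where "G t = vnorm n (gmap n \<eta> F (xs t))" for t
  have bnd0: "0 \<le> 4 * real n * M\<^sup>2 / \<epsilon>\<^sup>2" unfolding M_def by simp
  have goal: "\<exists>t::nat. real t \<le> 4 * real n * M\<^sup>2 / \<epsilon>\<^sup>2 \<and> G t < \<epsilon>"
  proof (cases "n = 0 \<or> length f = 0")
    case True
    then have "\<eta> = 0" unfolding \<eta>_def M_def by auto
    then have "G 0 = 0" unfolding G_def gmap_def vnorm_def by simp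
    then show ?thesis using bnd0 ep by (intro exI[of _ 0]) simp
  next
    case False
    then have n: "n > 0" and m: "M > 0" unfolding M_def by auto
    have Fr: "F = MM {..<n} (hh n f) {..<n}" unfolding F_def by (rule Fsum_repr)
    have hb: "\<And>B. \<bar>hh n f B\<bar> \<le> M" unfolding M_def by (rule hh_bound)
    have xs_suc: "xs (Suc t) = proj n (\<lambda>j. xs t j - \<eta> * grad n F (xs t) j)" for t
      unfolding xs_def pgd_def by simp
    have xs_b: "\<And>i. i < n \<Longrightarrow> \<bar>xs t i\<bar> \<le> 1" for t
    proof (induction t)
      case 0 then show ?case using x0 unfolding xs_def pgd_def cube_def by auto
    next
      case (Suc t) then show ?case unfolding xs_suc proj_clip clip_def by auto
    qed
    have desc: "F (xs (Suc t)) \<le> F (xs t) - \<eta>/2 * (G t)^2" for t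
      unfolding xs_suc G_def by (rule descent[OF n m hb xs_b Fr \<eta>_def])
    have Fb: "\<bar>F (xs t)\<bar> \<le> M" for t
    proof -
      have "\<bar>F (xs t)\<bar> \<le> M * 2 ^ card ({..<n} - {..<n})"
        unfolding Fr by (rule MM_bound) (use hb xs_b in auto)
      then show ?thesis by simp
    qed
    define T where "T = nat \<lfloor>4 * real n * M\<^sup>2 / \<epsilon>\<^sup>2\<rfloor>"
    have T1: "real T \<le> 4 * real n * M\<^sup>2 / \<epsilon>\<^sup>2" unfolding T_def using bnd0 by linarith
    have T2: "real T + 1 > 4 * real n * M\<^sup>2 / \<epsilon>\<^sup>2" unfolding T_def using bnd0 by linarith
    have eta: "\<eta> > 0" unfolding \<eta>_def using n m by simp
    show ?thesis
    proof (rule ccontr)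
      assume "\<not> ?thesis"
      then have big: "G t \<ge> \<epsilon>" if "t \<le> T" for t using that T1
        by (metis of_nat_le_iff order_trans not_le)
      have ind: "t \<le> Suc T \<longrightarrow> F (xs t) \<le> F (xs 0) - real t * (\<eta>/2 * \<epsilon>^2)" for t
      proof (induction t)
        case 0 then show ?case by simp
      next
        case (Suc t)
        show ?case
        proof
          assume st: "Suc t \<le> Suc T"
          then have "G t \<ge> \<epsilon>" using big by simp
          then have "\<epsilon>^2 \<le> (G t)^2" using ep by (intro power_mono) auto
          then have "\<eta>/2 * \<epsilon>^2 \<le> \<eta>/2 * (G t)^2" using eta by (intro mult_left_mono) auto
          then show "F (xs (Suc t)) \<le> F (xs 0) - real (Suc t) * (\<eta>/2 * \<epsilon>^2)"
          proof -
            have "F (xs t) \<le> F (xs 0) - real t * (\<eta>/2 * \<epsilon>^2)" using Suc.IH st by simp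
            then show ?thesis using desc[of t] \<open>\<eta>/2 * \<epsilon>^2 \<le> \<eta>/2 * (G t)^2\<close>
              by (simp only: of_nat_Suc distrib_right mult_1_left)
          qed
        qed
      qed
      from ind[of "Suc T"] have "(real T + 1) * (\<eta>/2 * \<epsilon>^2) \<le> F (xs 0) - F (xs (Suc T))" by (simp add: algebra_simps)
      also have "\<dots> \<le> 2 * M" using Fb[of 0] Fb[of "Suc T"] by linarith
      finally have A: "(real T + 1) * (\<eta>/2 * \<epsilon>^2) \<le> 2 * M" .
      have "(real T + 1) * \<epsilon>^2 \<le> 4 * real n * M^2"
      proof -
        have "(real T + 1) * \<epsilon>^2 = ((real T + 1) * (\<eta>/2 * \<epsilon>^2)) * (2 * real n * M)"
          unfolding \<eta>_def using n m by (simp add: field_simps)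
        also have "\<dots> \<le> 2 * M * (2 * real n * M)"
          using A n m by (intro mult_right_mono) auto
        finally show ?thesis by (simp add: power2_eq_square algebra_simps)
      qed
      moreover have "4 * real n * M^2 < (real T + 1) * \<epsilon>^2"
        using T2 ep by (simp add: divide_less_eq)
      ultimately show False by simp
    qed
  qed
  then show "let m = length f; \<eta> = 1 / (real n * real m); F = Fsum n f
       in \<exists>t. real t \<le> 4 * real n * (real m)\<^sup>2 / \<epsilon>\<^sup>2 \<and> vnorm n (gmap n \<eta> F (pgd n \<eta> F x0 t)) < \<epsilon>"
    unfolding Let_def G_def xs_def F_def \<eta>_def M_def .
qed simp

end
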